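(* Let $S\subset\mathbb N$ be finite. The following are equivalent: (1) $S$ is not a caterpillar; (2) there is a subset $T\subset S$ whose split is $T=(L,R)$ with $|L|,|R|\geq 2$; (3) there is a subset $T\subset S$ whose split is $T=(L,R)$ with $|L|=|R|=2$. Consequently, every subset of a caterpillar is a caterpillar.
   Context: For $m\in\mathbb N$ let $d(m)$ be the finite set of integers with $m=\sum_{i\in d(m)}2^i$. For a finite $S\subset\mathbb N$ with $|S|\geq2$, its first splitting index is $s(S)=\max\{i:\exists x,y\in S,\ i\in d(x)\setminus d(y)\}$; with $S_0=\{x\in S:s(S)\notin d(x)\}$ and $S_1=\{x\in S:s(S)\in d(x)\}$ (both nonempty), $(S_0,S_1)$ is the split of $S$, written $S=(S_0,S_1)$. Caterpillars are defined recursively: the empty set and all singletons are caterpillars; a finite $S\subset\mathbb N$ with $|S|\geq2$ and split $(S_0,S_1)$ is a caterpillar iff one of $S_0,S_1$ is a singleton and the other is a caterpillar. *)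

theory Defs
  imports Main
begin

definition digits :: "nat \<Rightarrow> nat set" where
  "digits m = {i. bit m i}"

text \<open>First splitting index s(S) (meaningful for finite S with at least 2 elements).\<close>
definition split_index :: "nat set \<Rightarrow> nat" where
  "split_index S = Max {i. \<exists>x\<in>S. \<exists>y\<in>S. i \<in> digits x - digits y}"

definition split0 :: "nat set \<Rightarrow> nat set" where
  "split0 S = {x\<in>S. split_index S \<notin> digits x}"

definition split1 :: "nat set \<Rightarrow> nat set" where
  "split1 S = {x\<in>S. split_index S \<in> digits x}"

text \<open>Caterpillars, defined recursively (the recursion is on strictly smaller sets,
  so the inductive definition coincides with the recursive one).\<close>
inductive caterpillar :: "nat set \<Rightarrow> bool" where
  empty: "caterpillar {}"
| single: "caterpillar {x}"
| split: "\<lbrakk>finite S; card S \<ge> 2;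
           (card (split0 S) = 1 \<and> caterpillar (split1 S)) \<or>
           (card (split1 S) = 1 \<and> caterpillar (split0 S))\<rbrakk> \<Longrightarrow> caterpillar S"

end

theory Submission
  imports Defs
begin

definition DS :: "nat set \<Rightarrow> nat set" where
  "DS S = {i. \<exists>x\<in>S. \<exists>y\<in>S. i \<in> digits x - digits y}"

lemma bit_lt: "bit (x::nat) i \<Longrightarrow> i < x"
proof -
  assume b: "bit x i"
  have "\<not> x < 2^i"
  proof
    assume "x < 2^i"
    then have "x div 2^i = 0" by simp
    with b show False by (simp add: bit_nat_def)
  qed
  moreover have "i < 2^i" by (rule less_exp)
  ultimately show ?thesis by (meson less_le_trans not_less)
qed

lemma DS_finite: "finite S \<Longrightarrow> finite (DS S)"
proof -
  assume f: "finite S"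
  have "DS S \<subseteq> {..< Max S}"
  proof
    fix i assume "i \<in> DS S"
    then obtain x where x: "x \<in> S" "bit x i" by (auto simp: DS_def digits_def)
    then have "i < x" by (simp add: bit_lt)
    moreover have "x \<le> Max S" using f x by simp
    ultimately show "i \<in> {..< Max S}" by simp
  qed
  then show ?thesis by (rule finite_subset) simp
qed

lemma DS_ne: "finite S \<Longrightarrow> card S \<ge> 2 \<Longrightarrow> DS S \<noteq> {}"
proof -
  assume "finite S" "card S \<ge> 2"
  then obtain x y where xy: "x \<in> S" "y \<in> S" "x \<noteq> y"
    by (metis One_nat_def card_le_Suc0_iff_eq not_less_eq_eq numeral_2_eq_2)
  then obtain i where "bit x i \<noteq> bit y i" using bit_eq_iff by blast
  then have "i \<in> DS S" using xy by (auto simp: DS_def digits_def)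
  then show ?thesis by blast
qed

lemma split_index_DS: "split_index S = Max (DS S)"
  by (simp add: split_index_def DS_def)

lemma si_mem: "finite S \<Longrightarrow> card S \<ge> 2 \<Longrightarrow> split_index S \<in> DS S"
  using DS_finite DS_ne split_index_DS Max_in by metis

lemma split_nonempty:
  assumes "finite S" "card S \<ge> 2"
  shows "split0 S \<noteq> {}" "split1 S \<noteq> {}"
proof -
  from si_mem[OF assms] obtain x y where "x \<in> S" "y \<in> S"
    "split_index S \<in> digits x" "split_index S \<notin> digits y"
    by (auto simp: DS_def)
  then show "split0 S \<noteq> {}" "split1 S \<noteq> {}" by (auto simp: split0_def split1_def)
qed

lemma split_card:
  assumes "finite S" "card S \<ge> 2"
  shows "card (split0 S) + card (split1 S) = card S"
proof -
  have "S = split0 S \<union> split1 S" "split0 S \<inter> split1 S = {}"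
    by (auto simp: split0_def split1_def)
  moreover have "finite (split0 S)" "finite (split1 S)"
    using assms(1) by (auto simp: split0_def split1_def)
  ultimately show ?thesis by (metis card_Un_disjoint)
qed

lemma split_sub:
  assumes f: "finite S" and T: "T \<subseteq> S" and x: "x \<in> T" "x \<in> split0 S"
    and y: "y \<in> T" "y \<in> split1 S"
  shows "split_index T = split_index S"
proof -
  have c: "card S \<ge> 2"
  proof -
    have "x \<noteq> y" using x y by (auto simp: split0_def split1_def)
    then have "card {x, y} \<le> card S" using x y T f by (intro card_mono) auto
    then show ?thesis using \<open>x \<noteq> y\<close> by simp
  qed
  have fT: "finite (DS T)" using f T by (meson DS_finite finite_subset)
  have "split_index S \<in> DS T" using x y by (auto simp: DS_def split0_def split1_def)
  moreover have "\<forall>i\<in>DS T. i \<le> split_index S"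
  proof
    fix i assume "i \<in> DS T"
    then have "i \<in> DS S" using T by (auto simp: DS_def)
    then show "i \<le> split_index S" using DS_finite[OF f] by (simp add: split_index_DS)
  qed
  ultimately show ?thesis using fT by (simp add: split_index_DS Max_eqI)
qed

lemma split_sub0:
  assumes "finite S" "T \<subseteq> S" "x \<in> T" "x \<in> split0 S" "y \<in> T" "y \<in> split1 S"
  shows "split0 T = T \<inter> split0 S" "split1 T = T \<inter> split1 S"
  using split_sub[OF assms] assms(2) by (auto simp: split0_def split1_def)

lemma noncat_A:
  "finite S \<Longrightarrow> \<not> caterpillar S \<Longrightarrow>
    (\<exists>T\<subseteq>S. card T \<ge> 2 \<and> card (split0 T) \<ge> 2 \<and> card (split1 T) \<ge> 2)"
proof (induction "card S" arbitrary: S rule: less_induct)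
  case less
  have c: "card S \<ge> 2"
  proof (rule ccontr)
    assume "\<not> card S \<ge> 2"
    then have "card S = 0 \<or> card S = 1" by auto
    then have "S = {} \<or> (\<exists>x. S = {x})" using less(2) card_1_singletonE by auto
    then show False using less(3) caterpillar.intros by auto
  qed
  have fs: "finite (split0 S)" "finite (split1 S)" using less(2) by (auto simp: split0_def split1_def)
  have sc: "card (split0 S) + card (split1 S) = card S" by (rule split_card[OF less(2) c])
  have n0: "card (split0 S) \<ge> 1" "card (split1 S) \<ge> 1"
    using split_nonempty[OF less(2) c] fs by (auto simp: Suc_le_eq card_gt_0_iff)
  have sub: "split0 S \<subseteq> S" "split1 S \<subseteq> S" by (auto simp: split0_def split1_def)
  show ?case
  proof (cases "card (split0 S) \<ge> 2 \<and> card (split1 S) \<ge> 2")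
    case True
    then show ?thesis using c by blast
  next
    case False
    then have "card (split0 S) = 1 \<or> card (split1 S) = 1" using n0 by linarith
    then show ?thesis
    proof
      assume h: "card (split0 S) = 1"
      then have "\<not> caterpillar (split1 S)" using less(3) caterpillar.split less(2) c by blast
      moreover have "card (split1 S) < card S" using sc h by simp
      ultimately obtain T where "T \<subseteq> split1 S" "card T \<ge> 2 \<and> card (split0 T) \<ge> 2 \<and> card (split1 T) \<ge> 2"
        using less(1) fs by blast
      then show ?thesis using sub by blast
    next
      assume h: "card (split1 S) = 1"
      then have "\<not> caterpillar (split0 S)" using less(3) caterpillar.split less(2) c by blast
      moreover have "card (split0 S) < card S" using sc h by simp
      ultimately obtain T where "T \<subseteq> split0 S" "card T \<ge> 2 \<and> card (split0 T) \<ge> 2 \<and> card (split1 T) \<ge> 2"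
        using less(1) fs by blast
      then show ?thesis using sub by blast
    qed
  qed
qed

lemma card_le1: "finite A \<Longrightarrow> A \<subseteq> {x} \<Longrightarrow> card A \<le> 1"
proof -
  assume "A \<subseteq> {x}"
  then have "card A \<le> card {x}" by (intro card_mono) auto
  then show ?thesis by simp
qed

lemma cat_D:
  "caterpillar S \<Longrightarrow> \<forall>T\<subseteq>S. \<not> (card (split0 T) \<ge> 2 \<and> card (split1 T) \<ge> 2)"
proof (induction rule: caterpillar.induct)
  case empty
  show ?case
  proof (intro allI impI)
    fix T :: "nat set" assume "T \<subseteq> {}"
    then have "split0 T = {}" by (auto simp: split0_def)
    then show "\<not> (card (split0 T) \<ge> 2 \<and> card (split1 T) \<ge> 2)" by simp
  qed
next
  case (single x)
  show ?case
  proof (intro allI impI)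
    fix T assume "T \<subseteq> {x}"
    then have sx: "split0 T \<subseteq> {x}" by (auto simp: split0_def)
    have "finite (split0 T)" by (rule finite_subset[OF sx]) simp
    then have "card (split0 T) \<le> 1" using sx by (rule card_le1)
    then show "\<not> (card (split0 T) \<ge> 2 \<and> card (split1 T) \<ge> 2)" by simp
  qed
next
  case (split S)
  have sub01: "split0 S \<subseteq> S" "split1 S \<subseteq> S" by (auto simp: split0_def split1_def)
  have cov: "\<And>T. T \<subseteq> S \<Longrightarrow> T \<subseteq> split0 S \<or> T \<subseteq> split1 S \<or>
        (split0 T \<subseteq> split0 S \<and> split1 T \<subseteq> split1 S)"
  proof -
    fix T assume T: "T \<subseteq> S"
    show "T \<subseteq> split0 S \<or> T \<subseteq> split1 S \<or> (split0 T \<subseteq> split0 S \<and> split1 T \<subseteq> split1 S)"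
    proof (cases "T \<inter> split0 S \<noteq> {} \<and> T \<inter> split1 S \<noteq> {}")
      case True
      then obtain x y where "x \<in> T" "x \<in> split0 S" "y \<in> T" "y \<in> split1 S" by blast
      from split_sub0[OF split(1) T this] show ?thesis by blast
    next
      case False
      then show ?thesis using T by (auto simp: split0_def split1_def)
    qed
  qed
  have fin: "\<And>T. T \<subseteq> S \<Longrightarrow> finite (split0 T) \<and> finite (split1 T)"
  proof -
    fix T assume "T \<subseteq> S"
    then have "finite T" using split(1) finite_subset by blast
    then show "finite (split0 T) \<and> finite (split1 T)" by (simp add: split0_def split1_def)
  qed
  have small: "\<And>A z. finite A \<Longrightarrow> A \<subseteq> {z} \<Longrightarrow> \<not> card A \<ge> 2"
    using card_le1 by fastforce
  have s0: "\<And>T. split0 T \<subseteq> T" "\<And>T. split1 T \<subseteq> T" by (auto simp: split0_def split1_def)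
  from split(3) show ?case
  proof
    assume h: "card (split0 S) = 1 \<and> caterpillar (split1 S) \<and>
       (\<forall>T\<subseteq>split1 S. \<not> (card (split0 T) \<ge> 2 \<and> card (split1 T) \<ge> 2))"
    then obtain z where z: "split0 S = {z}" by (meson card_1_singletonE)
    show ?thesis
    proof (intro allI impI)
      fix T assume T: "T \<subseteq> S"
      from cov[OF T] show "\<not> (card (split0 T) \<ge> 2 \<and> card (split1 T) \<ge> 2)"
      proof (elim disjE)
        assume "T \<subseteq> split0 S"
        then have "split0 T \<subseteq> {z}" using z s0(1)[of T] by simp
        then show ?thesis using small[OF conjunct1[OF fin[OF T]]] by blast
      next
        assume "T \<subseteq> split1 S" then show ?thesis using h[THEN conjunct2, THEN conjunct2] by simp
      next
        assume "split0 T \<subseteq> split0 S \<and> split1 T \<subseteq> split1 S"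
        then have "split0 T \<subseteq> {z}" using z by blast
        then show ?thesis using small[OF conjunct1[OF fin[OF T]]] by blast
      qed
    qed
  next
    assume h: "card (split1 S) = 1 \<and> caterpillar (split0 S) \<and>
       (\<forall>T\<subseteq>split0 S. \<not> (card (split0 T) \<ge> 2 \<and> card (split1 T) \<ge> 2))"
    then obtain z where z: "split1 S = {z}" by (meson card_1_singletonE)
    show ?thesis
    proof (intro allI impI)
      fix T assume T: "T \<subseteq> S"
      from cov[OF T] show "\<not> (card (split0 T) \<ge> 2 \<and> card (split1 T) \<ge> 2)"
      proof (elim disjE)
        assume "T \<subseteq> split0 S" then show ?thesis using h[THEN conjunct2, THEN conjunct2] by simp
      next
        assume "T \<subseteq> split1 S"
        then have "split1 T \<subseteq> {z}" using z s0(2)[of T] by simp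
        then show ?thesis using small[OF conjunct2[OF fin[OF T]]] by blast
      next
        assume "split0 T \<subseteq> split0 S \<and> split1 T \<subseteq> split1 S"
        then have "split1 T \<subseteq> {z}" using z by blast
        then show ?thesis using small[OF conjunct2[OF fin[OF T]]] by blast
      qed
    qed
  qed
qed

lemma B:
  assumes f: "finite S" and T: "T \<subseteq> S" "card T \<ge> 2" "card (split0 T) \<ge> 2" "card (split1 T) \<ge> 2"
  shows "\<exists>T\<subseteq>S. card T \<ge> 2 \<and> card (split0 T) = 2 \<and> card (split1 T) = 2"
proof -
  have fT: "finite T" using f T(1) by (rule finite_subset[rotated])
  have fT0: "finite (split0 T)" "finite (split1 T)" using fT by (simp_all add: split0_def split1_def)
  obtain A where A: "A \<subseteq> split0 T" "card A = 2" using obtain_subset_with_card_n[OF T(3)] by metis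
  obtain B where B: "B \<subseteq> split1 T" "card B = 2" using obtain_subset_with_card_n[OF T(4)] by metis
  obtain a1 a2 where Aeq: "A = {a1, a2}" "a1 \<noteq> a2" using A(2) card_2_iff by metis
  obtain b1 b2 where Beq: "B = {b1, b2}" "b1 \<noteq> b2" using B(2) card_2_iff by metis
  have a: "a1 \<in> T" "a1 \<in> split0 T" "a2 \<in> T" "a2 \<in> split0 T" using A Aeq by (auto simp: split0_def)
  have b: "b1 \<in> T" "b1 \<in> split1 T" "b2 \<in> T" "b2 \<in> split1 T" using B Beq by (auto simp: split1_def)
  define U where "U = {a1, a2, b1, b2}"
  have sub: "U \<subseteq> T" using a b by (simp add: U_def)
  have "a1 \<in> U" "b1 \<in> U" by (simp_all add: U_def)
  note eq = split_sub0[OF fT sub this(1) a(2) this(2) b(2)]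
  have d: "a1 \<noteq> b1" "a1 \<noteq> b2" "a2 \<noteq> b1" "a2 \<noteq> b2"
    using a b by (auto simp: split0_def split1_def)
  have e0: "split0 U = {a1, a2}"
  proof -
    have "U \<inter> split0 T = {a1, a2}" using a b by (auto simp: U_def split0_def split1_def)
    then show ?thesis using eq(1) by simp
  qed
  have e1: "split1 U = {b1, b2}"
  proof -
    have "U \<inter> split1 T = {b1, b2}" using a b by (auto simp: U_def split0_def split1_def)
    then show ?thesis using eq(2) by simp
  qed
  have "card U = 4" using d Aeq(2) Beq(2) by (simp add: U_def)
  moreover have "U \<subseteq> S" using sub T(1) by (rule order_trans)
  ultimately show ?thesis using e0 e1 Aeq(2) Beq(2) by (intro exI[of _ U]) simp
qed

theorem mainTheorem4:
  fixes S :: "nat set"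
  assumes "finite S"
  shows "(\<not> caterpillar S \<longleftrightarrow>
            (\<exists>T\<subseteq>S. card T \<ge> 2 \<and> card (split0 T) \<ge> 2 \<and> card (split1 T) \<ge> 2))
       \<and> ((\<exists>T\<subseteq>S. card T \<ge> 2 \<and> card (split0 T) \<ge> 2 \<and> card (split1 T) \<ge> 2) \<longleftrightarrow>
            (\<exists>T\<subseteq>S. card T \<ge> 2 \<and> card (split0 T) = 2 \<and> card (split1 T) = 2))
       \<and> (caterpillar S \<longrightarrow> (\<forall>T\<subseteq>S. caterpillar T))"
proof (intro conjI)
  show "(\<not> caterpillar S \<longleftrightarrow>
            (\<exists>T\<subseteq>S. card T \<ge> 2 \<and> card (split0 T) \<ge> 2 \<and> card (split1 T) \<ge> 2))"
  proof
    assume "\<not> caterpillar S"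
    then show "\<exists>T\<subseteq>S. card T \<ge> 2 \<and> card (split0 T) \<ge> 2 \<and> card (split1 T) \<ge> 2"
      by (rule noncat_A[OF assms])
  next
    assume "\<exists>T\<subseteq>S. card T \<ge> 2 \<and> card (split0 T) \<ge> 2 \<and> card (split1 T) \<ge> 2"
    then obtain T where T: "T \<subseteq> S" "card (split0 T) \<ge> 2 \<and> card (split1 T) \<ge> 2" by blast
    show "\<not> caterpillar S"
    proof
      assume "caterpillar S"
      from cat_D[OF this] T show False by blast
    qed
  qed
  show "((\<exists>T\<subseteq>S. card T \<ge> 2 \<and> card (split0 T) \<ge> 2 \<and> card (split1 T) \<ge> 2) \<longleftrightarrow>
            (\<exists>T\<subseteq>S. card T \<ge> 2 \<and> card (split0 T) = 2 \<and> card (split1 T) = 2))"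
  proof
    assume "\<exists>T\<subseteq>S. card T \<ge> 2 \<and> card (split0 T) \<ge> 2 \<and> card (split1 T) \<ge> 2"
    then obtain T where "T \<subseteq> S" "card T \<ge> 2" "card (split0 T) \<ge> 2" "card (split1 T) \<ge> 2" by blast
    then show "\<exists>T\<subseteq>S. card T \<ge> 2 \<and> card (split0 T) = 2 \<and> card (split1 T) = 2"
      by (rule B[OF assms])
  next
    assume "\<exists>T\<subseteq>S. card T \<ge> 2 \<and> card (split0 T) = 2 \<and> card (split1 T) = 2"
    then obtain T where "T \<subseteq> S" "card T \<ge> 2" "card (split0 T) = 2" "card (split1 T) = 2" by blast
    then show "\<exists>T\<subseteq>S. card T \<ge> 2 \<and> card (split0 T) \<ge> 2 \<and> card (split1 T) \<ge> 2"
      by (intro exI[of _ T]) simp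
  qed
  show "caterpillar S \<longrightarrow> (\<forall>T\<subseteq>S. caterpillar T)"
  proof (intro impI allI)
    fix T assume c: "caterpillar S" and T: "T \<subseteq> S"
    have fT: "finite T" using assms T by (rule finite_subset[rotated])
    show "caterpillar T"
    proof (rule ccontr)
      assume "\<not> caterpillar T"
      from noncat_A[OF fT this] obtain U where
        "U \<subseteq> T" "card (split0 U) \<ge> 2 \<and> card (split1 U) \<ge> 2" by blast
      moreover have "U \<subseteq> S" using \<open>U \<subseteq> T\<close> T by (rule order_trans)
      ultimately show False using cat_D[OF c] by blast
    qed
  qed
qed

end
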